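(* Write $\mathbb Z_2=\{1,\tau\}$ and let $\tau$ act on $\mathbb Z^n$ by $\tau\cdot\lambda=-\lambda$; form the semidirect product $\mathbb Z^n\rtimes\mathbb Z_2$, whose elements are written $\lambda\cdot x$ with $\lambda\in\mathbb Z^n$, $x\in\mathbb Z_2$. Let $e_1,\dots,e_n$ be the standard basis of $\mathbb Z^n$, and set $L_n^\circ=\{\lambda\cdot1 : \sum_i\lambda_i=0\}$ and $L_n^\tau=\{\lambda\cdot\tau:\sum_i\lambda_i=1\}$. Then: (1) The assignment $g_i\mapsto e_i\cdot\tau$ defines an injective group morphism $L_n\to\mathbb Z^n\rtimes\mathbb Z_2$. (2) Its image is $L_n^\circ\cup L_n^\tau$. (3) $L_n\cong\mathbb Z^{n-1}\rtimes\mathbb Z_2$, where $\mathbb Z_2$ acts on $\mathbb Z^{n-1}$ by $\lambda\mapsto-\lambda$.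
   Context: $L_n=\mathbb Z_2^{*n}/\langle abc=cba \mid a,b,c\in\{g_1,\dots,g_n\}\rangle$, where $g_1,\dots,g_n$ (with $g_i^2=1$) are the standard generators of the free product $\mathbb Z_2^{*n}$; we keep the notation $g_i$ for their images in $L_n$. $L_n$ is the diagonal group of $A_o^*(n)$, i.e. $C^*(L_n)=A_o^*(n)/\langle u_{ij}=0,\ i\ne j\rangle$ with $g_i$ the image of $u_{ii}$. *)

theory Defs
  imports "HOL-Algebra.Group"
begin

text \<open>Words in the generators g_0,...,g_(n-1) are lists of indices below n
(g_i is represented by the letter i; since g_i^2 = 1 every g_i is its own inverse,
so positive words suffice).\<close>

definition words :: "nat \<Rightarrow> nat list set" where
  "words n = {w. set w \<subseteq> {..<n}}"

inductive Lrel :: "nat \<Rightarrow> nat list \<Rightarrow> nat list \<Rightarrow> bool" for n :: nat where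
  refl: "w \<in> words n \<Longrightarrow> Lrel n w w"
| sym: "Lrel n w v \<Longrightarrow> Lrel n v w"
| trans: "Lrel n u v \<Longrightarrow> Lrel n v w \<Longrightarrow> Lrel n u w"
| square: "u \<in> words n \<Longrightarrow> v \<in> words n \<Longrightarrow> i < n \<Longrightarrow> Lrel n (u @ [i, i] @ v) (u @ v)"
| braid: "u \<in> words n \<Longrightarrow> v \<in> words n \<Longrightarrow> a < n \<Longrightarrow> b < n \<Longrightarrow> c < n \<Longrightarrow>
          Lrel n (u @ [a, b, c] @ v) (u @ [c, b, a] @ v)"

definition Lclass :: "nat \<Rightarrow> nat list \<Rightarrow> nat list set" where
  "Lclass n w = {v. Lrel n w v}"

definition L_grp :: "nat \<Rightarrow> nat list set monoid" where
  "L_grp n = \<lparr> carrier = Lclass n ` words n,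
               mult = (\<lambda>X Y. {w. \<exists>x\<in>X. \<exists>y\<in>Y. Lrel n (x @ y) w}),
               one = Lclass n [] \<rparr>"

definition gen :: "nat \<Rightarrow> nat \<Rightarrow> nat list set" where
  "gen n i = Lclass n [i]"

text \<open>Elements of Z^n are functions nat \<Rightarrow> int vanishing outside {..<n};
Z_2 = {1, \<tau>} is represented by bool, with False = 1 and True = \<tau>.
\<tau> acts on Z^n by negation, so (\<lambda>,x)(\<mu>,y) = (\<lambda> + x\<cdot>\<mu>, xy).\<close>

definition act :: "bool \<Rightarrow> (nat \<Rightarrow> int) \<Rightarrow> (nat \<Rightarrow> int)" where
  "act x m = (if x then (\<lambda>i. - m i) else m)"

definition sdp :: "nat \<Rightarrow> ((nat \<Rightarrow> int) \<times> bool) monoid" where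
  "sdp n = \<lparr> carrier = {(l, x). \<forall>i\<ge>n. l i = 0},
             mult = (\<lambda>(l, x) (m, y). (\<lambda>i. l i + act x m i, x \<noteq> y)),
             one = (\<lambda>i. 0, False) \<rparr>"

definition ebasis :: "nat \<Rightarrow> nat \<Rightarrow> int" where
  "ebasis i = (\<lambda>j. if j = i then 1 else 0)"

definition Lcirc :: "nat \<Rightarrow> ((nat \<Rightarrow> int) \<times> bool) set" where
  "Lcirc n = {(l, x). (\<forall>i\<ge>n. l i = 0) \<and> x = False \<and> (\<Sum>i<n. l i) = 0}"

definition Ltau :: "nat \<Rightarrow> ((nat \<Rightarrow> int) \<times> bool) set" where
  "Ltau n = {(l, x). (\<forall>i\<ge>n. l i = 0) \<and> x = True \<and> (\<Sum>i<n. l i) = 1}"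

end

theory Submission
  imports Defs
begin

lemma Lrel_words: "Lrel n w v \<Longrightarrow> w \<in> words n \<and> v \<in> words n"
  by (induction rule: Lrel.induct) (auto simp: words_def)

lemma words_app[simp]: "(u @ v \<in> words n) = (u \<in> words n \<and> v \<in> words n)"
  by (auto simp: words_def)

lemma Lrel_appL: "Lrel n w v \<Longrightarrow> u \<in> words n \<Longrightarrow> Lrel n (u @ w) (u @ v)"
proof (induction rule: Lrel.induct)
  case (refl w) then show ?case by (auto intro: Lrel.refl)
next
  case (sym w v) then show ?case by (auto intro: Lrel.sym)
next
  case (trans a b c) then show ?case by (auto intro: Lrel.trans)
next
  case (square x y i) then show ?case using Lrel.square[of "u @ x" n y i] by simp
next
  case (braid x y a b c) then show ?case using Lrel.braid[of "u @ x" n y a b c] by simp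
qed

lemma Lrel_appR: "Lrel n w v \<Longrightarrow> u \<in> words n \<Longrightarrow> Lrel n (w @ u) (v @ u)"
proof (induction rule: Lrel.induct)
  case (refl w) then show ?case by (auto intro: Lrel.refl)
next
  case (sym w v) then show ?case by (auto intro: Lrel.sym)
next
  case (trans a b c) then show ?case by (auto intro: Lrel.trans)
next
  case (square x y i) then show ?case using Lrel.square[of x n "y @ u" i] by simp
next
  case (braid x y a b c) then show ?case using Lrel.braid[of x n "y @ u" a b c] by simp
qed

lemma Lrel_cong: "Lrel n w w' \<Longrightarrow> Lrel n v v' \<Longrightarrow> Lrel n (w @ v) (w' @ v')"
  by (meson Lrel.trans Lrel_appL Lrel_appR Lrel_words)

lemma Lclass_eq: "Lrel n w v \<Longrightarrow> Lclass n w = Lclass n v"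
  unfolding Lclass_def by (auto intro: Lrel.trans Lrel.sym)

lemma Lclass_eqD: "Lclass n w = Lclass n v \<Longrightarrow> w \<in> words n \<Longrightarrow> Lrel n w v"
proof -
  assume a: "Lclass n w = Lclass n v" "w \<in> words n"
  have "w \<in> Lclass n w" using a(2) by (simp add: Lclass_def Lrel.refl)
  then have "w \<in> Lclass n v" using a(1) by simp
  then have "Lrel n v w" by (simp add: Lclass_def)
  then show ?thesis by (rule Lrel.sym)
qed

lemma Lclass_mult: "w \<in> words n \<Longrightarrow> v \<in> words n \<Longrightarrow>
   mult (L_grp n) (Lclass n w) (Lclass n v) = Lclass n (w @ v)"
  unfolding L_grp_def Lclass_def
  by (auto intro: Lrel.refl Lrel.trans Lrel_cong)

lemma Lrel_rev: "w \<in> words n \<Longrightarrow> Lrel n (rev w @ w) []"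
proof (induction w)
  case Nil then show ?case by (auto intro: Lrel.refl simp: words_def)
next
  case (Cons a w)
  have w: "w \<in> words n" "rev w \<in> words n" "a < n" using Cons.prems by (auto simp: words_def)
  have "Lrel n (rev w @ [a, a] @ w) (rev w @ w)" using Lrel.square[OF w(2) w(1) w(3)] .
  then show ?case using Cons w by (auto intro: Lrel.trans)
qed

lemma L_carrier: "carrier (L_grp n) = Lclass n ` words n" by (simp add: L_grp_def)
lemma L_one: "one (L_grp n) = Lclass n []" by (simp add: L_grp_def)

lemma group_L: "group (L_grp n)"
proof (rule groupI)
  show "one (L_grp n) \<in> carrier (L_grp n)" by (auto simp: L_carrier L_one words_def)
next
  fix x y assume "x \<in> carrier (L_grp n)" "y \<in> carrier (L_grp n)"
  then show "mult (L_grp n) x y \<in> carrier (L_grp n)" by (auto simp: L_carrier Lclass_mult)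
next
  fix x y z assume "x \<in> carrier (L_grp n)" "y \<in> carrier (L_grp n)" "z \<in> carrier (L_grp n)"
  then show "mult (L_grp n) (mult (L_grp n) x y) z = mult (L_grp n) x (mult (L_grp n) y z)"
    by (auto simp: L_carrier Lclass_mult)
next
  fix x assume "x \<in> carrier (L_grp n)"
  then show "mult (L_grp n) (one (L_grp n)) x = x"
    by (auto simp: L_carrier L_one Lclass_mult[of "[]", simplified] words_def)
next
  fix x assume "x \<in> carrier (L_grp n)"
  then obtain w where w: "w \<in> words n" "x = Lclass n w" by (auto simp: L_carrier)
  have r: "rev w \<in> words n" using w by (auto simp: words_def)
  show "\<exists>y\<in>carrier (L_grp n). mult (L_grp n) y x = one (L_grp n)"
    apply (rule bexI[of _ "Lclass n (rev w)"])
    using w r by (auto simp: L_carrier L_one Lclass_mult intro!: Lclass_eq Lrel_rev)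
qed

lemma sdp_carrier: "carrier (sdp n) = {(l, x). \<forall>i\<ge>n. l i = 0}" by (simp add: sdp_def)
lemma sdp_mult: "mult (sdp n) (l, x) (m, y) = (\<lambda>i. l i + act x m i, x \<noteq> y)" by (simp add: sdp_def)
lemma sdp_one: "one (sdp n) = (\<lambda>i. 0, False)" by (simp add: sdp_def)

lemma group_sdp: "group (sdp n)"
proof (rule groupI)
  show "one (sdp n) \<in> carrier (sdp n)" by (simp add: sdp_def)
next
  fix x y assume "x \<in> carrier (sdp n)" "y \<in> carrier (sdp n)"
  then show "mult (sdp n) x y \<in> carrier (sdp n)" by (auto simp: sdp_def act_def)
next
  fix x y z assume "x \<in> carrier (sdp n)" "y \<in> carrier (sdp n)" "z \<in> carrier (sdp n)"
  then show "mult (sdp n) (mult (sdp n) x y) z = mult (sdp n) x (mult (sdp n) y z)"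
    by (cases x; cases y; cases z) (auto simp: sdp_def act_def fun_eq_iff)
next
  fix x assume "x \<in> carrier (sdp n)"
  then show "mult (sdp n) (one (sdp n)) x = x"
    by (cases x) (auto simp: sdp_def act_def)
next
  fix x assume x: "x \<in> carrier (sdp n)"
  obtain l b where lb: "x = (l, b)" by (cases x)
  show "\<exists>y\<in>carrier (sdp n). mult (sdp n) y x = one (sdp n)"
    apply (rule bexI[of _ "(act b (\<lambda>i. - l i), b)"])
    using x lb by (auto simp: sdp_def act_def)
qed

lemma sdp_mult_indep: "mult (sdp n) = mult (sdp 0)" by (simp add: sdp_def)

primrec Fw :: "nat list \<Rightarrow> (nat \<Rightarrow> int) \<times> bool" where
  "Fw [] = (\<lambda>i. 0, False)"
| "Fw (a # w) = mult (sdp 0) (ebasis a, True) (Fw w)"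

lemma sdp_assoc_all: "mult (sdp n) (mult (sdp n) x y) z = mult (sdp n) x (mult (sdp n) y z)"
  by (cases x; cases y; cases z) (auto simp: sdp_def act_def fun_eq_iff)

lemma sdp_one_all: "mult (sdp n) (one (sdp n)) x = x"
  by (cases x) (auto simp: sdp_def act_def)

lemma Fw_app: "Fw (w @ v) = mult (sdp 0) (Fw w) (Fw v)"
proof (induction w)
  case Nil then show ?case using sdp_one_all[of 0 "Fw v"] by (simp add: sdp_one)
next
  case (Cons a w) then show ?case by (simp add: sdp_assoc_all)
qed

lemma Fw_Lrel: "Lrel n w v \<Longrightarrow> Fw w = Fw v"
proof (induction rule: Lrel.induct)
  case (square u v i)
  have "Fw [i, i] = Fw []" by (simp add: sdp_def act_def ebasis_def fun_eq_iff)
  moreover have "Fw (u @ [i, i] @ v) = mult (sdp 0) (Fw u) (mult (sdp 0) (Fw [i, i]) (Fw v))"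
    by (simp only: Fw_app)
  moreover have "mult (sdp 0) (Fw []) (Fw v) = Fw v" using sdp_one_all[of 0 "Fw v"] by (simp add: sdp_one)
  ultimately show ?case by (simp only: Fw_app)
next
  case (braid u v a b c)
  have "Fw [a, b, c] = Fw [c, b, a]" by (simp add: sdp_def act_def ebasis_def fun_eq_iff)
  moreover have "Fw (u @ [a, b, c] @ v) = mult (sdp 0) (Fw u) (mult (sdp 0) (Fw [a, b, c]) (Fw v))"
    by (simp only: Fw_app)
  moreover have "Fw (u @ [c, b, a] @ v) = mult (sdp 0) (Fw u) (mult (sdp 0) (Fw [c, b, a]) (Fw v))"
    by (simp only: Fw_app)
  ultimately show ?case by simp
qed auto

lemma Fw_carrier: "w \<in> words n \<Longrightarrow> Fw w \<in> carrier (sdp n)"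
  by (induction w) (auto simp: words_def sdp_def act_def ebasis_def)

definition fL :: "nat list set \<Rightarrow> (nat \<Rightarrow> int) \<times> bool" where
  "fL X = Fw (SOME w. w \<in> X)"

lemma fL_Lclass: "w \<in> words n \<Longrightarrow> fL (Lclass n w) = Fw w"
proof -
  assume w: "w \<in> words n"
  have "w \<in> Lclass n w" using w by (simp add: Lclass_def Lrel.refl)
  then have "(SOME v. v \<in> Lclass n w) \<in> Lclass n w" by (rule someI)
  then have "Lrel n w (SOME v. v \<in> Lclass n w)" by (simp add: Lclass_def)
  then show ?thesis unfolding fL_def by (metis Fw_Lrel)
qed

lemma fL_hom: "fL \<in> hom (L_grp n) (sdp n)"
  unfolding hom_def
proof (intro CollectI conjI ballI)
  show "fL \<in> carrier (L_grp n) \<rightarrow> carrier (sdp n)"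
    by (auto simp: L_carrier fL_Lclass Fw_carrier)
next
  fix x y assume "x \<in> carrier (L_grp n)" "y \<in> carrier (L_grp n)"
  then obtain w v where "w \<in> words n" "v \<in> words n" "x = Lclass n w" "y = Lclass n v"
    by (auto simp: L_carrier)
  then show "fL (mult (L_grp n) x y) = mult (sdp n) (fL x) (fL y)"
    by (simp add: Lclass_mult fL_Lclass Fw_app sdp_mult_indep[of n])
qed

lemma fL_gen: "i < n \<Longrightarrow> fL (gen n i) = (ebasis i, True)"
  by (simp add: gen_def fL_Lclass words_def sdp_def act_def)

definition tt :: "nat \<Rightarrow> nat \<Rightarrow> nat list set" where
  "tt n i = gen n i \<otimes>\<^bsub>L_grp n\<^esub> gen n (n - 1)"

primrec Q :: "nat \<Rightarrow> (nat \<Rightarrow> int) \<Rightarrow> nat \<Rightarrow> nat list set" where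
  "Q n \<mu> 0 = \<one>\<^bsub>L_grp n\<^esub>"
| "Q n \<mu> (Suc j) = Q n \<mu> j \<otimes>\<^bsub>L_grp n\<^esub> (tt n j [^]\<^bsub>L_grp n\<^esub> \<mu> j)"

context fixes n :: nat assumes n1: "1 \<le> n" begin

interpretation G: group "L_grp n" by (rule group_L)

lemma gen_carrier: "i < n \<Longrightarrow> gen n i \<in> carrier (L_grp n)"
  by (auto simp: gen_def L_carrier words_def)

lemma gen_sq: "i < n \<Longrightarrow> gen n i \<otimes>\<^bsub>L_grp n\<^esub> gen n i = \<one>\<^bsub>L_grp n\<^esub>"
  using Lrel.square[of "[]" n "[]" i]
  by (auto simp: gen_def Lclass_mult words_def L_one intro!: Lclass_eq)

lemma gen_inv: "i < n \<Longrightarrow> inv\<^bsub>L_grp n\<^esub> (gen n i) = gen n i"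
  by (simp add: G.inv_equality gen_carrier gen_sq)

lemma gen_braid: "a < n \<Longrightarrow> b < n \<Longrightarrow> c < n \<Longrightarrow>
  gen n a \<otimes>\<^bsub>L_grp n\<^esub> gen n b \<otimes>\<^bsub>L_grp n\<^esub> gen n c
  = gen n c \<otimes>\<^bsub>L_grp n\<^esub> gen n b \<otimes>\<^bsub>L_grp n\<^esub> gen n a"
  using Lrel.braid[of "[]" n "[]" a b c]
  by (auto simp: gen_def Lclass_mult words_def intro!: Lclass_eq)

lemma c_lt: "n - 1 < n" using n1 by simp
lemma c_lt': "n - Suc 0 < n" using n1 by simp

lemma tt_carrier: "i < n \<Longrightarrow> tt n i \<in> carrier (L_grp n)"
  by (simp add: tt_def gen_carrier c_lt)

lemma tt_comm: "a < n \<Longrightarrow> b < n \<Longrightarrow> tt n a \<otimes>\<^bsub>L_grp n\<^esub> tt n b = tt n b \<otimes>\<^bsub>L_grp n\<^esub> tt n a"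
proof -
  assume a: "a < n" and b: "b < n"
  note gc = gen_carrier[OF a] gen_carrier[OF b] gen_carrier[OF c_lt] gen_carrier[OF c_lt']
  have "tt n a \<otimes>\<^bsub>L_grp n\<^esub> tt n b
     = (gen n a \<otimes>\<^bsub>L_grp n\<^esub> gen n (n-1) \<otimes>\<^bsub>L_grp n\<^esub> gen n b) \<otimes>\<^bsub>L_grp n\<^esub> gen n (n-1)"
    by (simp add: tt_def gc G.m_assoc)
  also have "\<dots> = (gen n b \<otimes>\<^bsub>L_grp n\<^esub> gen n (n-1) \<otimes>\<^bsub>L_grp n\<^esub> gen n a) \<otimes>\<^bsub>L_grp n\<^esub> gen n (n-1)"
    by (simp add: gen_braid a b c_lt c_lt')
  also have "\<dots> = tt n b \<otimes>\<^bsub>L_grp n\<^esub> tt n a"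
    by (simp add: tt_def gc G.m_assoc)
  finally show ?thesis .
qed

lemma comm_inv:
  assumes "x \<in> carrier (L_grp n)" "y \<in> carrier (L_grp n)"
    "x \<otimes>\<^bsub>L_grp n\<^esub> y = y \<otimes>\<^bsub>L_grp n\<^esub> x"
  shows "x \<otimes>\<^bsub>L_grp n\<^esub> inv\<^bsub>L_grp n\<^esub> y = inv\<^bsub>L_grp n\<^esub> y \<otimes>\<^bsub>L_grp n\<^esub> x"
proof -
  have iy: "inv\<^bsub>L_grp n\<^esub> y \<in> carrier (L_grp n)" using assms by simp
  have e1: "inv\<^bsub>L_grp n\<^esub> y \<otimes>\<^bsub>L_grp n\<^esub> (y \<otimes>\<^bsub>L_grp n\<^esub> x) = x"
    using assms(1,2) iy by (simp add: G.m_assoc[symmetric])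
  have e2: "x \<otimes>\<^bsub>L_grp n\<^esub> y \<otimes>\<^bsub>L_grp n\<^esub> inv\<^bsub>L_grp n\<^esub> y = x"
    using assms(1,2) iy by (simp add: G.m_assoc)
  have "inv\<^bsub>L_grp n\<^esub> y \<otimes>\<^bsub>L_grp n\<^esub> x = inv\<^bsub>L_grp n\<^esub> y \<otimes>\<^bsub>L_grp n\<^esub> (x \<otimes>\<^bsub>L_grp n\<^esub> y \<otimes>\<^bsub>L_grp n\<^esub> inv\<^bsub>L_grp n\<^esub> y)"
    by (simp only: e2)
  also have "\<dots> = inv\<^bsub>L_grp n\<^esub> y \<otimes>\<^bsub>L_grp n\<^esub> (y \<otimes>\<^bsub>L_grp n\<^esub> x \<otimes>\<^bsub>L_grp n\<^esub> inv\<^bsub>L_grp n\<^esub> y)"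
    by (simp only: assms(3))
  also have "\<dots> = (inv\<^bsub>L_grp n\<^esub> y \<otimes>\<^bsub>L_grp n\<^esub> (y \<otimes>\<^bsub>L_grp n\<^esub> x)) \<otimes>\<^bsub>L_grp n\<^esub> inv\<^bsub>L_grp n\<^esub> y"
    using assms(1,2) iy by (simp add: G.m_assoc)
  also have "\<dots> = x \<otimes>\<^bsub>L_grp n\<^esub> inv\<^bsub>L_grp n\<^esub> y"
    using e1 by simp
  finally show ?thesis by simp
qed

lemma tt_pow_comm: "a < n \<Longrightarrow> b < n \<Longrightarrow>
   tt n a \<otimes>\<^bsub>L_grp n\<^esub> (tt n b [^]\<^bsub>L_grp n\<^esub> (k::int)) = (tt n b [^]\<^bsub>L_grp n\<^esub> k) \<otimes>\<^bsub>L_grp n\<^esub> tt n a"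
proof -
  assume a: "a < n" and b: "b < n"
  have nat: "tt n a \<otimes>\<^bsub>L_grp n\<^esub> (tt n b [^]\<^bsub>L_grp n\<^esub> (m::nat)) = (tt n b [^]\<^bsub>L_grp n\<^esub> m) \<otimes>\<^bsub>L_grp n\<^esub> tt n a" for m
    using G.group_commutes_pow[of "tt n b" "tt n a" m] tt_comm[OF a b] tt_carrier a b by simp
  show ?thesis
  proof (cases "k \<ge> 0")
    case True then show ?thesis using nat[of "nat k"] by (simp only: int_pow_def2 if_False not_less[symmetric] True)
  next
    case False
    have "tt n a \<otimes>\<^bsub>L_grp n\<^esub> inv\<^bsub>L_grp n\<^esub> (tt n b [^]\<^bsub>L_grp n\<^esub> nat (-k))
      = inv\<^bsub>L_grp n\<^esub> (tt n b [^]\<^bsub>L_grp n\<^esub> nat (-k)) \<otimes>\<^bsub>L_grp n\<^esub> tt n a"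
      by (rule comm_inv) (use nat[of "nat (-k)"] tt_carrier a b in auto)
    then show ?thesis using False by (simp only: int_pow_def2) simp
  qed
qed

lemma Q_carrier: "m \<le> n \<Longrightarrow> Q n \<mu> m \<in> carrier (L_grp n)"
  by (induction m) (auto simp: tt_carrier)

lemma Q_cong: "(\<forall>i<m. \<mu> i = \<nu> i) \<Longrightarrow> Q n \<mu> m = Q n \<nu> m"
  by (induction m) auto

lemma Q_step: "a < m \<Longrightarrow> m \<le> n \<Longrightarrow>
   Q n \<mu> m \<otimes>\<^bsub>L_grp n\<^esub> tt n a = Q n (\<mu>(a := \<mu> a + 1)) m"
proof (induction m arbitrary: \<mu>)
  case 0 then show ?case by simp
next
  case (Suc j)
  have QC: "Q n \<mu> j \<in> carrier (L_grp n)" using Suc by (simp add: Q_carrier)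
  have tc: "tt n a \<in> carrier (L_grp n)" "tt n j \<in> carrier (L_grp n)" using Suc by (auto simp: tt_carrier)
  show ?case
  proof (cases "a = j")
    case True
    have e: "Q n (\<mu>(a := \<mu> a + 1)) j = Q n \<mu> j" using True by (intro Q_cong) auto
    have "Q n \<mu> (Suc j) \<otimes>\<^bsub>L_grp n\<^esub> tt n a = Q n \<mu> j \<otimes>\<^bsub>L_grp n\<^esub> (tt n j [^]\<^bsub>L_grp n\<^esub> \<mu> j) \<otimes>\<^bsub>L_grp n\<^esub> tt n j"
      using True by simp
    also have "\<dots> = Q n \<mu> j \<otimes>\<^bsub>L_grp n\<^esub> (tt n j [^]\<^bsub>L_grp n\<^esub> (\<mu> j + 1))"
      using QC tc by (simp add: G.int_pow_mult G.m_assoc)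
    also have "\<dots> = Q n (\<mu>(a := \<mu> a + 1)) (Suc j)"
      using True e by simp
    finally show ?thesis .
  next
    case False
    then have aj: "a < j" using Suc by simp
    have "Q n \<mu> (Suc j) \<otimes>\<^bsub>L_grp n\<^esub> tt n a
       = (Q n \<mu> j \<otimes>\<^bsub>L_grp n\<^esub> tt n a) \<otimes>\<^bsub>L_grp n\<^esub> (tt n j [^]\<^bsub>L_grp n\<^esub> \<mu> j)"
    proof -
      have pc: "tt n j [^]\<^bsub>L_grp n\<^esub> \<mu> j \<in> carrier (L_grp n)" using tc by simp
      have cm: "tt n j [^]\<^bsub>L_grp n\<^esub> \<mu> j \<otimes>\<^bsub>L_grp n\<^esub> tt n a = tt n a \<otimes>\<^bsub>L_grp n\<^esub> (tt n j [^]\<^bsub>L_grp n\<^esub> \<mu> j)"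
        using tt_pow_comm[of a j "\<mu> j"] Suc aj by simp
      have "Q n \<mu> (Suc j) \<otimes>\<^bsub>L_grp n\<^esub> tt n a = Q n \<mu> j \<otimes>\<^bsub>L_grp n\<^esub> (tt n j [^]\<^bsub>L_grp n\<^esub> \<mu> j \<otimes>\<^bsub>L_grp n\<^esub> tt n a)"
        using QC tc pc by (simp add: G.m_assoc)
      also have "\<dots> = Q n \<mu> j \<otimes>\<^bsub>L_grp n\<^esub> (tt n a \<otimes>\<^bsub>L_grp n\<^esub> (tt n j [^]\<^bsub>L_grp n\<^esub> \<mu> j))"
        by (simp only: cm)
      also have "\<dots> = (Q n \<mu> j \<otimes>\<^bsub>L_grp n\<^esub> tt n a) \<otimes>\<^bsub>L_grp n\<^esub> (tt n j [^]\<^bsub>L_grp n\<^esub> \<mu> j)"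
        using QC tc pc by (simp add: G.m_assoc)
      finally show ?thesis .
    qed
    also have "\<dots> = Q n (\<mu>(a := \<mu> a + 1)) (Suc j)"
      using Suc.IH[of \<mu>] Suc.prems aj False by (simp add: fun_upd_def)
    finally show ?thesis .
  qed
qed

end

definition gx :: "nat \<Rightarrow> bool \<Rightarrow> nat list set" where
  "gx n x = (if x then gen n (n - 1) else \<one>\<^bsub>L_grp n\<^esub>)"

definition vQ :: "nat \<Rightarrow> (nat \<Rightarrow> int) \<Rightarrow> nat \<Rightarrow> nat \<Rightarrow> int" where
  "vQ n \<mu> m = (\<lambda>i. if i < m then \<mu> i else if i = n - 1 then - (\<Sum>j<m. \<mu> j) else 0)"

lemma sdp_nat_pow: "(v, False) [^]\<^bsub>sdp n\<^esub> (m::nat) = (\<lambda>i. int m * v i, False)"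
  by (induction m) (auto simp: sdp_def act_def algebra_simps)

lemma sdp_int_pow: assumes "(v, False) \<in> carrier (sdp n)"
  shows "(v, False) [^]\<^bsub>sdp n\<^esub> (k::int) = (\<lambda>i. k * v i, False)"
proof (cases "k < 0")
  case False then show ?thesis by (simp add: int_pow_def2 sdp_nat_pow)
next
  case True
  interpret S: group "sdp n" by (rule group_sdp)
  have c: "(\<lambda>i. int (nat (- k)) * v i, False) \<in> carrier (sdp n)" using assms by (auto simp: sdp_def)
  have "inv\<^bsub>sdp n\<^esub> (\<lambda>i. int (nat (- k)) * v i, False) = (\<lambda>i. k * v i, False)"
    by (rule S.inv_equality) (use True c in \<open>auto simp: sdp_def act_def algebra_simps\<close>)
  then show ?thesis using True by (simp add: int_pow_def2 sdp_nat_pow)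
qed

context fixes n :: nat assumes n1: "1 \<le> n" begin

interpretation G: group "L_grp n" by (rule group_L)

lemma gx_carrier: "gx n x \<in> carrier (L_grp n)"
  using gen_carrier[OF n1 c_lt[OF n1]] by (simp add: gx_def)

lemma Q_tc: "a < n \<Longrightarrow> Q n \<mu> (n-1) \<otimes>\<^bsub>L_grp n\<^esub> tt n a = Q n (\<mu>(a := \<mu> a + 1)) (n-1)"
proof (cases "a < n - 1")
  case True
  assume "a < n" then show ?thesis using Q_step[OF n1 True] by simp
next
  case False
  assume a: "a < n"
  then have ac: "a = n - 1" using False by simp
  have "tt n a = \<one>\<^bsub>L_grp n\<^esub>" using ac gen_sq[OF n1 a] by (simp add: tt_def)
  moreover have "Q n (\<mu>(a := \<mu> a + 1)) (n-1) = Q n \<mu> (n-1)" using ac by (intro Q_cong[OF n1]) auto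
  ultimately show ?thesis using Q_carrier[OF n1, of "n-1" \<mu>] n1 by simp
qed

lemma Q_tc_inv: "a < n \<Longrightarrow> Q n \<mu> (n-1) \<otimes>\<^bsub>L_grp n\<^esub> inv\<^bsub>L_grp n\<^esub> (tt n a) = Q n (\<mu>(a := \<mu> a - 1)) (n-1)"
proof -
  assume a: "a < n"
  let ?\<nu> = "\<mu>(a := \<mu> a - 1)"
  have "Q n ?\<nu> (n-1) \<otimes>\<^bsub>L_grp n\<^esub> tt n a = Q n \<mu> (n-1)"
    using Q_tc[OF a, of ?\<nu>] by simp
  then have "Q n \<mu> (n-1) \<otimes>\<^bsub>L_grp n\<^esub> inv\<^bsub>L_grp n\<^esub> (tt n a)
     = Q n ?\<nu> (n-1) \<otimes>\<^bsub>L_grp n\<^esub> tt n a \<otimes>\<^bsub>L_grp n\<^esub> inv\<^bsub>L_grp n\<^esub> (tt n a)" by simp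
  also have "\<dots> = Q n ?\<nu> (n-1)"
    using Q_carrier[OF n1, of "n-1" ?\<nu>] tt_carrier[OF n1 a] by (simp add: G.m_assoc)
  finally show ?thesis .
qed

lemma repr: "w \<in> words n \<Longrightarrow> \<exists>\<mu> x. Lclass n w = Q n \<mu> (n-1) \<otimes>\<^bsub>L_grp n\<^esub> gx n x"
proof (induction w rule: rev_induct)
  case Nil
  show ?case
    apply (rule exI[of _ "\<lambda>i. 0"], rule exI[of _ False])
  proof -
    have "Q n (\<lambda>i. 0) m = \<one>\<^bsub>L_grp n\<^esub>" for m by (induction m) auto
    then show "Lclass n [] = Q n (\<lambda>i. 0) (n - 1) \<otimes>\<^bsub>L_grp n\<^esub> gx n False"
      by (simp add: gx_def L_one[symmetric])
  qed
next
  case (snoc a w)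
  have w: "w \<in> words n" and a: "a < n" using snoc.prems by (auto simp: words_def)
  obtain \<mu> x where IH: "Lclass n w = Q n \<mu> (n-1) \<otimes>\<^bsub>L_grp n\<^esub> gx n x" using snoc.IH w by blast
  have cl: "Lclass n (w @ [a]) = Lclass n w \<otimes>\<^bsub>L_grp n\<^esub> gen n a"
    using w a by (simp add: gen_def Lclass_mult words_def)
  note QC = Q_carrier[OF n1, of "n-1" \<mu>]
  note gc = gen_carrier[OF n1 a] gen_carrier[OF n1 c_lt[OF n1]] gen_carrier[OF n1 c_lt'[OF n1]]
  show ?case
  proof (cases x)
    case False
    have ga: "gen n a = tt n a \<otimes>\<^bsub>L_grp n\<^esub> gen n (n-1)"
      using gc gen_sq[OF n1 c_lt[OF n1]] by (simp add: tt_def G.m_assoc)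
    have "Lclass n (w @ [a]) = Q n \<mu> (n-1) \<otimes>\<^bsub>L_grp n\<^esub> tt n a \<otimes>\<^bsub>L_grp n\<^esub> gen n (n-1)"
      using cl IH False QC gc tt_carrier[OF n1 a] by (simp add: gx_def G.m_assoc ga)
    also have "\<dots> = Q n (\<mu>(a := \<mu> a + 1)) (n-1) \<otimes>\<^bsub>L_grp n\<^esub> gx n True"
      using Q_tc[OF a] by (simp add: gx_def)
    finally show ?thesis by blast
  next
    case True
    have ia: "inv\<^bsub>L_grp n\<^esub> (tt n a) = gen n (n-1) \<otimes>\<^bsub>L_grp n\<^esub> gen n a"
      using gc by (simp add: tt_def G.inv_mult_group gen_inv[OF n1] a c_lt[OF n1] gen_inv[OF n1 c_lt'[OF n1]])
    have "Lclass n (w @ [a]) = Q n \<mu> (n-1) \<otimes>\<^bsub>L_grp n\<^esub> inv\<^bsub>L_grp n\<^esub> (tt n a)"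
      using cl IH True QC gc by (simp add: gx_def G.m_assoc ia)
    also have "\<dots> = Q n (\<mu>(a := \<mu> a - 1)) (n-1) \<otimes>\<^bsub>L_grp n\<^esub> gx n False"
      using Q_tc_inv[OF a] Q_carrier[OF n1, of "n-1" "\<mu>(a := \<mu> a - 1)"] by (simp add: gx_def)
    finally show ?thesis by blast
  qed
qed

lemma fL_tt: "j < n \<Longrightarrow> fL (tt n j) = (\<lambda>i. ebasis j i - ebasis (n-1) i, False)"
  using fL_hom[of n] gen_carrier[OF n1] c_lt[OF n1]
  by (simp add: tt_def hom_mult fL_gen sdp_def act_def)

lemma fL_Q: "m \<le> n - 1 \<Longrightarrow> fL (Q n \<mu> m) = (vQ n \<mu> m, False)"
proof (induction m)
  case 0
  then show ?case using fL_hom[of n] by (simp add: L_one fL_Lclass words_def vQ_def fun_eq_iff)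
next
  case (Suc j)
  have j: "j < n" "j \<noteq> n - 1" using Suc.prems by auto
  have tc: "tt n j \<in> carrier (L_grp n)" using tt_carrier[OF n1 j(1)] .
  have ttc: "(\<lambda>i. ebasis j i - ebasis (n-1) i, False) \<in> carrier (sdp n)"
    using j(1) c_lt[OF n1] by (auto simp: sdp_def ebasis_def)
  have "fL (Q n \<mu> (Suc j)) = mult (sdp n) (fL (Q n \<mu> j)) (fL (tt n j [^]\<^bsub>L_grp n\<^esub> \<mu> j))"
    using fL_hom[of n] Q_carrier[OF n1, of j \<mu>] tc Suc.prems by (simp add: hom_mult)
  also have "fL (tt n j [^]\<^bsub>L_grp n\<^esub> \<mu> j) = (\<lambda>i. \<mu> j * (ebasis j i - ebasis (n-1) i), False)"
    using hom_int_pow[OF fL_hom tc group_L group_sdp] fL_tt[OF j(1)] sdp_int_pow[OF ttc] by simp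
  finally show ?case using Suc j
    by (auto simp: sdp_def act_def vQ_def ebasis_def fun_eq_iff less_Suc_eq)
qed

end

definition phi :: "nat \<Rightarrow> (nat \<Rightarrow> int) \<times> bool \<Rightarrow> (nat \<Rightarrow> int) \<times> bool" where
  "phi n p = (\<lambda>i. if i < n - 1 then fst p i else 0, snd p)"

lemma phi_hom: "phi n \<in> hom (sdp n) (sdp (n - 1))"
  unfolding hom_def
proof (intro CollectI conjI ballI)
  show "phi n \<in> carrier (sdp n) \<rightarrow> carrier (sdp (n - 1))" by (auto simp: phi_def sdp_def)
next
  fix p q assume "p \<in> carrier (sdp n)" "q \<in> carrier (sdp n)"
  then show "phi n (mult (sdp n) p q) = mult (sdp (n - 1)) (phi n p) (phi n q)"
    by (cases p; cases q) (auto simp: phi_def sdp_def act_def fun_eq_iff)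
qed

context fixes n :: nat assumes n1: "1 \<le> n" begin

interpretation G: group "L_grp n" by (rule group_L)

lemma rep_carrier: "Q n \<mu> (n-1) \<otimes>\<^bsub>L_grp n\<^esub> gx n x \<in> carrier (L_grp n)"
  using Q_carrier[OF n1, of "n-1" \<mu>] gx_carrier[OF n1, of x] by simp

lemma fL_rep: "fL (Q n \<mu> (n-1) \<otimes>\<^bsub>L_grp n\<^esub> gx n x)
   = (\<lambda>i. vQ n \<mu> (n-1) i + (if x then ebasis (n-1) i else 0), x)"
proof -
  have "fL (Q n \<mu> (n-1) \<otimes>\<^bsub>L_grp n\<^esub> gx n x) = mult (sdp n) (vQ n \<mu> (n-1), False) (fL (gx n x))"
    using fL_hom[of n] Q_carrier[OF n1, of "n-1" \<mu>] gx_carrier[OF n1, of x] fL_Q[OF n1, of "n-1" \<mu>]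
    by (simp add: hom_mult)
  moreover have "fL (gx n x) = (if x then (ebasis (n-1), True) else (\<lambda>i. 0, False))"
    using fL_gen[of "n-1" n] c_lt[OF n1] fL_hom[of n]
    by (auto simp: gx_def L_one fL_Lclass words_def)
  ultimately show ?thesis by (auto simp: sdp_def act_def fun_eq_iff)
qed

lemmas fL_rep' = fL_rep[unfolded One_nat_def]

lemma rep_eq: "(\<forall>i<n-1. \<mu> i = \<nu> i) \<Longrightarrow>
   Q n \<mu> (n-1) \<otimes>\<^bsub>L_grp n\<^esub> gx n x = Q n \<nu> (n-1) \<otimes>\<^bsub>L_grp n\<^esub> gx n x"
  using Q_cong[OF n1] by metis

lemma carrier_rep: "X \<in> carrier (L_grp n) \<Longrightarrow> \<exists>\<mu> x. X = Q n \<mu> (n-1) \<otimes>\<^bsub>L_grp n\<^esub> gx n x"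
  using repr[OF n1] by (auto simp: L_carrier)

lemma fL_rep_coord: "i < n - 1 \<Longrightarrow> fst (fL (Q n \<mu> (n-1) \<otimes>\<^bsub>L_grp n\<^esub> gx n x)) i = \<mu> i"
  by (simp add: fL_rep fL_rep' vQ_def ebasis_def)

lemma fL_inj: "inj_on fL (carrier (L_grp n))"
proof (rule inj_onI)
  fix X Y assume X: "X \<in> carrier (L_grp n)" and Y: "Y \<in> carrier (L_grp n)" and e: "fL X = fL Y"
  obtain \<mu> x where x: "X = Q n \<mu> (n-1) \<otimes>\<^bsub>L_grp n\<^esub> gx n x" using carrier_rep[OF X] by blast
  obtain \<nu> y where y: "Y = Q n \<nu> (n-1) \<otimes>\<^bsub>L_grp n\<^esub> gx n y" using carrier_rep[OF Y] by blast
  have "x = y" using e x y by (simp add: fL_rep fL_rep')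
  moreover have "\<forall>i<n-1. \<mu> i = \<nu> i"
  proof (intro allI impI)
    fix i assume i: "i < n - 1"
    have "\<mu> i = fst (fL X) i" using fL_rep_coord[OF i, of \<mu> x] x by simp
    also have "\<dots> = fst (fL Y) i" using e by simp
    also have "\<dots> = \<nu> i" using fL_rep_coord[OF i, of \<nu> y] y by simp
    finally show "\<mu> i = \<nu> i" .
  qed
  ultimately show "X = Y" using x y rep_eq[of \<mu> \<nu> y] by simp
qed

lemma sum_split: "(\<Sum>i<n. l i) = (\<Sum>i<n-1. l i) + l (n - 1)"
proof -
  have "n = Suc (n - 1)" using n1 by simp
  then show ?thesis by (metis lessThan_Suc sum.lessThan_Suc)
qed

lemma fL_image: "fL ` carrier (L_grp n) = Lcirc n \<union> Ltau n"
proof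
  show "fL ` carrier (L_grp n) \<subseteq> Lcirc n \<union> Ltau n"
  proof
    fix p assume "p \<in> fL ` carrier (L_grp n)"
    then obtain X where X: "X \<in> carrier (L_grp n)" "p = fL X" by blast
    obtain \<mu> x where x: "X = Q n \<mu> (n-1) \<otimes>\<^bsub>L_grp n\<^esub> gx n x" using carrier_rep[OF X(1)] by blast
    let ?l = "\<lambda>i. vQ n \<mu> (n-1) i + (if x then ebasis (n-1) i else 0)"
    have p: "p = (?l, x)" using X x fL_rep by (simp only:)
    have z: "\<forall>i\<ge>n. ?l i = 0" using n1 by (auto simp: vQ_def ebasis_def)
    have "(\<Sum>i<n. ?l i) = (\<Sum>i<n-1. ?l i) + ?l (n-1)" by (rule sum_split)
    also have "(\<Sum>i<n-1. ?l i) = (\<Sum>i<n-1. \<mu> i)"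
      by (rule sum.cong) (auto simp: vQ_def ebasis_def)
    also have "?l (n-1) = - (\<Sum>i<n-1. \<mu> i) + (if x then 1 else 0)"
      by (simp add: vQ_def ebasis_def)
    finally have s: "(\<Sum>i<n. ?l i) = (if x then 1 else 0)" by simp
    show "p \<in> Lcirc n \<union> Ltau n" using p z s by (cases x) (auto simp: Lcirc_def Ltau_def)
  qed
next
  show "Lcirc n \<union> Ltau n \<subseteq> fL ` carrier (L_grp n)"
  proof
    fix p assume p: "p \<in> Lcirc n \<union> Ltau n"
    obtain l x where lx: "p = (l, x)" by (cases p)
    have z: "\<forall>i\<ge>n. l i = 0" and s: "(\<Sum>i<n. l i) = (if x then 1 else 0)"
      using p lx by (auto simp: Lcirc_def Ltau_def)
    have s2: "l (n-1) = - (\<Sum>i<n-1. l i) + (if x then 1 else 0)" using s sum_split[of l] by simp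
    have "vQ n l (n - 1) i + (if x then ebasis (n - 1) i else 0) = l i" for i
      using z s2 n1 by (cases "i < n - 1"; cases "i = n - 1") (auto simp: vQ_def ebasis_def)
    then have ll: "(\<lambda>i. vQ n l (n - 1) i + (if x then ebasis (n - 1) i else 0)) = l" by (rule ext)
    have "fL (Q n l (n-1) \<otimes>\<^bsub>L_grp n\<^esub> gx n x) = (l, x)"
      by (simp only: fL_rep ll)
    then show "p \<in> fL ` carrier (L_grp n)" using lx rep_carrier by (metis image_eqI)
  qed
qed

lemma L_iso: "L_grp n \<cong> sdp (n - 1)"
proof -
  let ?h = "phi n \<circ> fL"
  have hom: "?h \<in> hom (L_grp n) (sdp (n - 1))" by (rule hom_compose[OF fL_hom phi_hom])
  have hv: "?h (Q n \<mu> (n-1) \<otimes>\<^bsub>L_grp n\<^esub> gx n x) = (\<lambda>i. if i < n - 1 then \<mu> i else 0, x)" for \<mu> x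
    by (simp only: comp_apply fL_rep) (auto simp: phi_def vQ_def ebasis_def fun_eq_iff)
  have inj: "inj_on ?h (carrier (L_grp n))"
  proof (rule inj_onI)
    fix X Y assume X: "X \<in> carrier (L_grp n)" and Y: "Y \<in> carrier (L_grp n)" and e: "?h X = ?h Y"
    obtain \<mu> x where x: "X = Q n \<mu> (n-1) \<otimes>\<^bsub>L_grp n\<^esub> gx n x" using carrier_rep[OF X] by blast
    obtain \<nu> y where y: "Y = Q n \<nu> (n-1) \<otimes>\<^bsub>L_grp n\<^esub> gx n y" using carrier_rep[OF Y] by blast
    have e2: "(\<lambda>i. if i < n - 1 then \<mu> i else 0, x) = (\<lambda>i. if i < n - 1 then \<nu> i else 0, y)"
      using e x y hv[of \<mu> x] hv[of \<nu> y] by simp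
    then have "x = y" by simp
    moreover have "\<forall>i<n-1. \<mu> i = \<nu> i"
    proof (intro allI impI)
      fix i assume i: "i < n - 1"
      have f: "(\<lambda>i. if i < n - 1 then \<mu> i else 0) = (\<lambda>i. if i < n - 1 then \<nu> i else 0)"
        using e2 by (simp only: prod.inject)
      show "\<mu> i = \<nu> i" using fun_cong[OF f, of i] i by simp
    qed
    ultimately show "X = Y" using x y rep_eq[of \<mu> \<nu> y] by simp
  qed
  have img: "?h ` carrier (L_grp n) = carrier (sdp (n - 1))"
  proof
    show "?h ` carrier (L_grp n) \<subseteq> carrier (sdp (n - 1))" using hom by (auto simp: hom_def)
  next
    show "carrier (sdp (n - 1)) \<subseteq> ?h ` carrier (L_grp n)"
    proof
      fix p assume p: "p \<in> carrier (sdp (n - 1))"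
      obtain l x where lx: "p = (l, x)" by (cases p)
      have "?h (Q n l (n-1) \<otimes>\<^bsub>L_grp n\<^esub> gx n x) = p"
        using p lx by (simp only: hv) (auto simp: sdp_def fun_eq_iff)
      then show "p \<in> ?h ` carrier (L_grp n)" using rep_carrier by (metis image_eqI)
    qed
  qed
  have "?h \<in> iso (L_grp n) (sdp (n - 1))"
    using isoI[OF hom] inj img unfolding bij_betw_def by blast
  then show ?thesis by (auto simp: is_iso_def)
qed

end

theorem proposition6p1:
  fixes n :: nat
  assumes "n \<ge> 1"
  shows "group (L_grp n) \<and> group (sdp n) \<and>
    (\<exists>f. f \<in> hom (L_grp n) (sdp n) \<and>
         (\<forall>i<n. f (gen n i) = (ebasis i, True)) \<and>
         inj_on f (carrier (L_grp n)) \<and>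
         f ` carrier (L_grp n) = Lcirc n \<union> Ltau n) \<and>
    L_grp n \<cong> sdp (n - 1)"
  using group_L group_sdp fL_hom fL_gen fL_inj[OF assms] fL_image[OF assms] L_iso[OF assms]
  by blast

end
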